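(* Every graph $G$ (with at least one vertex) of sd-degeneracy at most $d$ admits a clean signed tree model of width at most $d+1$.
   Context: sd-degeneracy: for distinct vertices $u,v$ let $\mathrm{sd}_G(u,v) := |(N_G(u)\setminus\{v\}) \triangle (N_G(v)\setminus\{u\})|$; $\mathrm{sdd}(G)$ is the smallest $d\ge 0$ such that $|V(G)|=1$ or there are distinct $u,v$ with $\mathrm{sd}_G(u,v)\le d$ and $\mathrm{sdd}(G-v)\le d$. Tree notation: for a rooted tree $T$, $u\prec_T u'$ means $u$ is a strict ancestor of $u'$, and $u\preceq_T u'$ means $u=u'$ or $u\prec_T u'$. For unordered pairs, $uv\preceq_T u'v'$ means ($u\preceq_T u'$ and $v\preceq_T v'$) or ($v\preceq_T u'$ and $u\preceq_T v'$); $uv\prec_T u'v'$ means $uv\preceq_T u'v'$ and $\{u,v\}\neq\{u',v'\}$. A rooted binary tree is full if every non-leaf node has exactly two children. A transversal pair of $T$ is an unordered pair of distinct nodes neither of which is an ancestor of the other. Two transversal pairs $\{u,v\},\{u',v'\}$ cross if their endpoints can be named $\{a,b\}=\{u,v\}$, $\{a',b'\}=\{u',v'\}$ so that $a\prec_T a'$ and $b'\prec_T b$. A signed tree model is a triple $(T,A(T),B(T))$ where $T$ is a full rooted binary tree, and $A(T)$ (green edges / transversal anti-edges) and $B(T)$ (blue edges / transversal edges) are disjoint sets of transversal pairs of $T$ such that no two pairs in $A(T)\cup B(T)$ cross. It defines the graph $G_{\mathcal T}$ with vertex set the set $L(T)$ of leaves of $T$, where distinct leaves $u,v$ are adjacent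 iff there is $u'v'\in B(T)$ with $u'v'\preceq_T uv$ and there is no $u''v''\in A(T)$ with $u'v'\prec_T u''v''\preceq_T uv$. A graph $G$ admits the model if $G$ is (isomorphic to) $G_{\mathcal T}$ via a bijection between $V(G)$ and $L(T)$. The width of the model is the degeneracy of the graph $(V(T),A(T)\cup B(T))$. The model is clean if every pair of sibling nodes of $T$ belongs to $A(T)\cup B(T)$. *)

theory Defs
  imports Main
begin

definition graph :: "'a set \<Rightarrow> ('a \<Rightarrow> 'a \<Rightarrow> bool) \<Rightarrow> bool" where
  "graph V E \<longleftrightarrow> finite V \<and> (\<forall>x y. E x y \<longrightarrow> x \<in> V \<and> y \<in> V)
     \<and> (\<forall>x y. E x y \<longrightarrow> E y x) \<and> (\<forall>x. \<not> E x x)"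

definition nbhd :: "'a set \<Rightarrow> ('a \<Rightarrow> 'a \<Rightarrow> bool) \<Rightarrow> 'a \<Rightarrow> 'a set" where
  "nbhd V E u = {w \<in> V. E u w}"

definition sd :: "'a set \<Rightarrow> ('a \<Rightarrow> 'a \<Rightarrow> bool) \<Rightarrow> 'a \<Rightarrow> 'a \<Rightarrow> nat" where
  "sd V E u v = card (((nbhd V E u - {v}) - (nbhd V E v - {u}))
                    \<union> ((nbhd V E v - {u}) - (nbhd V E u - {v})))"

text \<open>sdd_le V E d means sdd(G) \<le> d for the induced graph G on V (edges E restricted to V).
  Since the defining condition is monotone in d, sdd(G) \<le> d holds iff |V| = 1 or
  there are distinct u, v with sd(u,v) \<le> d and sdd(G - v) \<le> d.\<close>
inductive sdd_le :: "'a set \<Rightarrow> ('a \<Rightarrow> 'a \<Rightarrow> bool) \<Rightarrow> nat \<Rightarrow> bool" where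
  single: "card V = 1 \<Longrightarrow> sdd_le V E d"
| step: "\<lbrakk>u \<in> V; v \<in> V; u \<noteq> v; sd V E u v \<le> d; sdd_le (V - {v}) E d\<rbrakk>
           \<Longrightarrow> sdd_le V E d"

definition full_binary_tree :: "bool list set \<Rightarrow> bool" where
  "full_binary_tree N \<longleftrightarrow> finite N \<and> [] \<in> N
     \<and> (\<forall>p b. p @ [b] \<in> N \<longrightarrow> p \<in> N)
     \<and> (\<forall>p. p @ [True] \<in> N \<longleftrightarrow> p @ [False] \<in> N)"

definition leaves :: "bool list set \<Rightarrow> bool list set" where
  "leaves N = {p \<in> N. p @ [False] \<notin> N}"

definition anc :: "bool list \<Rightarrow> bool list \<Rightarrow> bool" where
  "anc u u' \<longleftrightarrow> (\<exists>w. w \<noteq> [] \<and> u' = u @ w)"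

definition anc_eq :: "bool list \<Rightarrow> bool list \<Rightarrow> bool" where
  "anc_eq u u' \<longleftrightarrow> u = u' \<or> anc u u'"

text \<open>Unordered pairs are represented as sets.\<close>
definition pair_le :: "bool list set \<Rightarrow> bool list set \<Rightarrow> bool" where
  "pair_le P Q \<longleftrightarrow> (\<exists>u v u' v'. P = {u, v} \<and> Q = {u', v'} \<and> anc_eq u u' \<and> anc_eq v v')"

definition pair_lt :: "bool list set \<Rightarrow> bool list set \<Rightarrow> bool" where
  "pair_lt P Q \<longleftrightarrow> pair_le P Q \<and> P \<noteq> Q"

definition transversal :: "bool list set \<Rightarrow> bool list set \<Rightarrow> bool" where
  "transversal N P \<longleftrightarrow> (\<exists>u v. P = {u, v} \<and> u \<in> N \<and> v \<in> N \<and> u \<noteq> v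
      \<and> \<not> anc u v \<and> \<not> anc v u)"

definition cross :: "bool list set \<Rightarrow> bool list set \<Rightarrow> bool" where
  "cross P Q \<longleftrightarrow> (\<exists>a b a' b'. P = {a, b} \<and> Q = {a', b'} \<and> anc a a' \<and> anc b' b)"

definition signed_tree_model :: "bool list set \<Rightarrow> bool list set set \<Rightarrow> bool list set set \<Rightarrow> bool" where
  "signed_tree_model N A B \<longleftrightarrow> full_binary_tree N
     \<and> (\<forall>P \<in> A \<union> B. transversal N P) \<and> A \<inter> B = {}
     \<and> (\<forall>P \<in> A \<union> B. \<forall>Q \<in> A \<union> B. \<not> cross P Q)"

definition model_adj :: "bool list set set \<Rightarrow> bool list set set \<Rightarrow> bool list \<Rightarrow> bool list \<Rightarrow> bool" where
  "model_adj A B x y \<longleftrightarrow> x \<noteq> y \<and> (\<exists>P \<in> B. pair_le P {x, y}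
      \<and> \<not> (\<exists>Q \<in> A. pair_lt P Q \<and> pair_le Q {x, y}))"

definition degeneracy_le :: "'b set \<Rightarrow> 'b set set \<Rightarrow> nat \<Rightarrow> bool" where
  "degeneracy_le Vs Es k \<longleftrightarrow> (\<forall>S \<subseteq> Vs. S \<noteq> {} \<longrightarrow>
      (\<exists>x \<in> S. card {y \<in> S. y \<noteq> x \<and> {x, y} \<in> Es} \<le> k))"

definition clean :: "bool list set \<Rightarrow> bool list set set \<Rightarrow> bool list set set \<Rightarrow> bool" where
  "clean N A B \<longleftrightarrow> (\<forall>p. p @ [False] \<in> N \<longrightarrow> {p @ [False], p @ [True]} \<in> A \<union> B)"

definition admits_model :: "'a set \<Rightarrow> ('a \<Rightarrow> 'a \<Rightarrow> bool) \<Rightarrow> bool list set \<Rightarrow> bool list set set \<Rightarrow> bool list set set \<Rightarrow> bool" where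
  "admits_model V E N A B \<longleftrightarrow> (\<exists>f. bij_betw f V (leaves N)
      \<and> (\<forall>x \<in> V. \<forall>y \<in> V. x \<noteq> y \<longrightarrow> (E x y \<longleftrightarrow> model_adj A B (f x) (f y))))"

end

theory Submission
  imports Defs
begin


lemma anc_eq_iff: "anc_eq u u' \<longleftrightarrow> (\<exists>w. u' = u @ w)"
  by (auto simp: anc_eq_def anc_def)

lemma anc_eq_antisym: "anc_eq a b \<Longrightarrow> anc_eq b a \<Longrightarrow> a = b"
  by (auto simp: anc_eq_iff)

lemma anc_eq_trans: "anc_eq a b \<Longrightarrow> anc_eq b c \<Longrightarrow> anc_eq a c"
  by (auto simp: anc_eq_iff)

lemma anc_eq_refl: "anc_eq a a"
  by (auto simp: anc_eq_iff)

lemma pair_le_iff: "pair_le {c,d} {a,b} \<longleftrightarrow> (anc_eq c a \<and> anc_eq d b) \<or> (anc_eq d a \<and> anc_eq c b)"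
  unfolding pair_le_def by (auto simp: doubleton_eq_iff)


lemma anc_eq_snoc: "anc_eq a (p @ [b]) \<longleftrightarrow> a = p @ [b] \<or> anc_eq a p"
  unfolding anc_eq_iff
proof
  assume "\<exists>w. p @ [b] = a @ w"
  then obtain w where w: "p @ [b] = a @ w" by blast
  show "a = p @ [b] \<or> (\<exists>w. p = a @ w)"
  proof (cases w rule: rev_cases)
    case Nil then show ?thesis using w by simp
  next
    case (snoc w' c) then show ?thesis using w by auto
  qed
qed auto

lemma ftree_prefix: "full_binary_tree N \<Longrightarrow> p @ w \<in> N \<Longrightarrow> p \<in> N"
proof (induction w rule: rev_induct)
  case Nil then show ?case by simp
next
  case (snoc x xs) then show ?case unfolding full_binary_tree_def
    by (metis append_assoc)
qed


lemma pair_le_antisym: "pair_le {c,d} {a,b} \<Longrightarrow> pair_le {a,b} {c,d} \<Longrightarrow> {c,d} = {a,b}"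
  unfolding pair_le_iff
  apply (elim disjE conjE)
  apply (metis anc_eq_antisym)
  apply (metis anc_eq_antisym anc_eq_trans)
  apply (metis anc_eq_antisym anc_eq_trans)
  apply (metis anc_eq_antisym insert_commute)
  done

lemma leaf_no_anc: "full_binary_tree N \<Longrightarrow> a \<in> leaves N \<Longrightarrow> a' \<in> N \<Longrightarrow> \<not> anc a a'"
proof
  assume t: "full_binary_tree N" and l: "a \<in> leaves N" and "a' \<in> N" and "anc a a'"
  then obtain w where w: "w \<noteq> []" "a' = a @ w" unfolding anc_def by blast
  then obtain b w' where "w = b # w'" by (cases w) auto
  then have "a' = (a @ [b]) @ w'" using w by simp
  then have "a @ [b] \<in> N" using ftree_prefix[OF t] \<open>a' \<in> N\<close> by blast
  then have "a @ [False] \<in> N" using t unfolding full_binary_tree_def by (cases b) auto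
  then show False using l unfolding leaves_def by auto
qed

lemma leaf_anc_eq: "full_binary_tree N \<Longrightarrow> a \<in> leaves N \<Longrightarrow> a' \<in> N \<Longrightarrow> anc_eq a a' \<Longrightarrow> a = a'"
  using leaf_no_anc anc_eq_def by blast

lemma new_pair_le: "full_binary_tree N \<Longrightarrow> c \<in> leaves N \<Longrightarrow> d \<in> leaves N \<Longrightarrow> a \<in> N \<Longrightarrow> b \<in> N
   \<Longrightarrow> pair_le {c,d} {a,b} \<Longrightarrow> {c,d} = {a,b}"
  unfolding pair_le_iff
  apply (elim disjE conjE)
  apply (metis leaf_anc_eq)
  apply (metis leaf_anc_eq insert_commute)
  done

lemma adj_in_B: "{a,b} \<in> B \<Longrightarrow> a \<noteq> b \<Longrightarrow> model_adj A B a b"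
  unfolding model_adj_def pair_lt_def
proof (intro conjI bexI[of _ "{a,b}"])
  show "pair_le {a, b} {a, b}" by (simp add: pair_le_iff anc_eq_refl)
  show "\<not> (\<exists>Q\<in>A. (pair_le {a, b} Q \<and> {a, b} \<noteq> Q) \<and> pair_le Q {a, b})"
  proof
    assume "\<exists>Q\<in>A. (pair_le {a, b} Q \<and> {a, b} \<noteq> Q) \<and> pair_le Q {a, b}"
    then obtain Q where "pair_le {a, b} Q" "{a, b} \<noteq> Q" "pair_le Q {a, b}" by blast
    moreover from \<open>pair_le Q {a, b}\<close> obtain c d where "Q = {c,d}" unfolding pair_le_def by blast
    ultimately show False using pair_le_antisym by blast
  qed
qed auto

lemma adj_in_A: "{a,b} \<in> A \<Longrightarrow> A \<inter> B = {} \<Longrightarrow> \<not> model_adj A B a b"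
  unfolding model_adj_def pair_lt_def
proof clarify
  fix P assume "{a,b} \<in> A" "A \<inter> B = {}" "P \<in> B" "pair_le P {a,b}"
    "\<not> (\<exists>Q\<in>A. (pair_le P Q \<and> P \<noteq> Q) \<and> pair_le Q {a, b})"
  moreover have "pair_le {a, b} {a, b}" by (simp add: pair_le_iff anc_eq_refl)
  ultimately show False by blast
qed

lemma leaves_sub: "leaves N \<subseteq> N" by (auto simp: leaves_def)




lemma adj_transfer:
  assumes "x\<noteq>y" "x'\<noteq>y'" "\<And>P. (P\<in>B \<and> pair_le P {x,y}) = (P\<in>B' \<and> pair_le P {x',y'})"
    "\<And>P. (P\<in>A \<and> pair_le P {x,y}) = (P\<in>A' \<and> pair_le P {x',y'})"
  shows "model_adj A B x y = model_adj A' B' x' y'"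
  using assms unfolding model_adj_def by blast

lemma adj_sym: "model_adj A B a b = model_adj A B b a"
  unfolding model_adj_def by (auto simp: insert_commute)



lemma main:
  assumes "sdd_le V E d" "\<forall>x y. E x y \<longrightarrow> E y x" "\<forall>x. \<not> E x x"
  shows "\<exists>N A B. signed_tree_model N A B \<and> clean N A B \<and> degeneracy_le N (A \<union> B) (d+1) \<and> admits_model V E N A B"
  using assms
proof (induction rule: sdd_le.induct)
  case (single V E d)
  then obtain x where V: "V = {x}" by (auto simp: card_1_singleton_iff)
  let ?N = "{[]::bool list}"
  have ft: "full_binary_tree ?N" by (auto simp: full_binary_tree_def)
  have lv: "leaves ?N = {[]}" by (auto simp: leaves_def)
  have "admits_model V E ?N {} {}" unfolding admits_model_def
    by (rule exI[of _ "\<lambda>_. []"]) (simp add: V lv bij_betw_def)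
  then show ?case
    apply (intro exI[of _ ?N] exI[of _ "{}"])
    using ft by (auto simp: signed_tree_model_def clean_def degeneracy_le_def)
next
  case (step u V v E d)
  have symE: "\<And>x y. E x y = E y x" using step.prems by blast
  have irr: "\<And>x. \<not> E x x" using step.prems by blast
  from step.IH step.prems obtain N' A' B' f' where
    stm: "signed_tree_model N' A' B'" and cl: "clean N' A' B'"
    and dg: "degeneracy_le N' (A' \<union> B') (d+1)"
    and bij: "bij_betw f' (V - {v}) (leaves N')"
    and adj: "\<forall>x\<in>V-{v}. \<forall>y\<in>V-{v}. x\<noteq>y \<longrightarrow> (E x y \<longleftrightarrow> model_adj A' B' (f' x) (f' y))"
    unfolding admits_model_def by blast
  have ft: "full_binary_tree N'" using stm by (simp add: signed_tree_model_def)
  have tr: "\<forall>P\<in>A'\<union>B'. transversal N' P" using stm by (simp add: signed_tree_model_def)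
  have disj: "A' \<inter> B' = {}" using stm by (simp add: signed_tree_model_def)
  have nc: "\<forall>P\<in>A'\<union>B'. \<forall>Q\<in>A'\<union>B'. \<not> cross P Q" using stm by (simp add: signed_tree_model_def)
  have finN': "finite N'" using ft by (simp add: full_binary_tree_def)
  have finj: "inj_on f' (V - {v})" using bij by (simp add: bij_betw_def)
  have fimg: "f' ` (V - {v}) = leaves N'" using bij by (simp add: bij_betw_def)
  have fN: "\<And>x. x \<in> V - {v} \<Longrightarrow> f' x \<in> leaves N'" using fimg by blast
  have finV: "finite V"
  proof -
    have "finite (leaves N')" using finN' leaves_sub finite_subset by blast
    then have "finite (V - {v})" using bij bij_betw_finite by blast
    then show ?thesis by simp
  qed
  define p where "p = f' u"
  define L where "L = p @ [False]"
  define R where "R = p @ [True]"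
  define D where "D = ((nbhd V E u - {v}) - (nbhd V E v - {u})) \<union> ((nbhd V E v - {u}) - (nbhd V E u - {v}))"
  define NA where "NA = {{R, f' w} | w. w \<in> D \<and> \<not> E v w} \<union> (if E u v then {} else {{L,R}})"
  define NB where "NB = {{R, f' w} | w. w \<in> D \<and> E v w} \<union> (if E u v then {{L,R}} else {})"
  define N where "N = N' \<union> {L, R}"
  define A where "A = A' \<union> NA"
  define B where "B = B' \<union> NB"
  define g where "g = (\<lambda>x. if x = v then R else if x = u then L else f' x)"
  have uV': "u \<in> V - {v}" using step.hyps by blast
  have pleaf: "p \<in> leaves N'" using fN uV' p_def by blast
  have pN: "p \<in> N'" using pleaf leaves_sub by blast
  have LN': "L \<notin> N'" using pleaf by (simp add: leaves_def L_def)
  have RN': "R \<notin> N'" using LN' ft by (simp add: full_binary_tree_def L_def R_def)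
  have LR: "L \<noteq> R" by (simp add: L_def R_def)
  have Dsub: "D \<subseteq> V - {u, v}" using irr by (auto simp: D_def nbhd_def)
  have Dchar: "\<And>w. w \<in> V - {u,v} \<Longrightarrow> w \<in> D \<longleftrightarrow> (E u w \<noteq> E v w)"
    by (auto simp: D_def nbhd_def)
  have Dfin: "finite D" using Dsub finV finite_subset by blast
  have Dcard: "card D \<le> d" using step.hyps(4) by (simp add: sd_def D_def)
  have fD: "\<And>w. w \<in> D \<Longrightarrow> f' w \<in> leaves N' \<and> f' w \<noteq> p"
  proof -
    fix w assume "w \<in> D"
    then have w: "w \<in> V - {v}" "w \<noteq> u" using Dsub by auto
    then show "f' w \<in> leaves N' \<and> f' w \<noteq> p" using fN finj uV' p_def inj_on_eq_iff by metis
  qed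
  have leavesN: "leaves N = (leaves N' - {p}) \<union> {L, R}"
  proof -
    have "L @ [False] \<notin> N'" using LN' ftree_prefix[OF ft, of L "[False]"] by blast
    moreover have "R @ [False] \<notin> N'" using RN' ftree_prefix[OF ft, of R "[False]"] by blast
    moreover have "\<And>z. z \<in> N' \<Longrightarrow> z \<noteq> p \<Longrightarrow> z @ [False] \<noteq> L \<and> z @ [False] \<noteq> R"
      by (auto simp: L_def R_def)
    ultimately show ?thesis using pN unfolding leaves_def N_def L_def R_def by auto
  qed
  have ftN: "full_binary_tree N"
    unfolding full_binary_tree_def
  proof (intro conjI allI)
    show "finite N" using finN' by (simp add: N_def)
    show "[] \<in> N" using ft by (simp add: N_def full_binary_tree_def)
    fix q
    show "\<And>b. q @ [b] \<in> N \<longrightarrow> q \<in> N" using ft pN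
      by (auto simp: N_def L_def R_def full_binary_tree_def)
    show "(q @ [True] \<in> N) = (q @ [False] \<in> N)"
    proof (cases "q = p")
      case True then show ?thesis by (simp add: N_def L_def R_def)
    next
      case False then show ?thesis using ft by (simp add: N_def L_def R_def full_binary_tree_def)
    qed
  qed
  have RL_leaves: "R \<in> leaves N" "L \<in> leaves N" using leavesN by auto
  have newform: "\<And>P. P \<in> NA \<union> NB \<Longrightarrow> \<exists>c. c \<in> leaves N \<and> c \<noteq> R \<and> c \<notin> N' - leaves N' \<and> P = {R, c}"
  proof -
    fix P assume "P \<in> NA \<union> NB"
    then have "(\<exists>w. w \<in> D \<and> P = {R, f' w}) \<or> P = {L, R}"
      by (auto simp: NA_def NB_def split: if_splits)
    then show "\<exists>c. c \<in> leaves N \<and> c \<noteq> R \<and> c \<notin> N' - leaves N' \<and> P = {R, c}"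
    proof
      assume "\<exists>w. w \<in> D \<and> P = {R, f' w}"
      then obtain w where "w \<in> D" "P = {R, f' w}" by blast
      then show ?thesis using fD[of w] leavesN RN' leaves_sub by (intro exI[of _ "f' w"]) auto
    next
      assume "P = {L, R}"
      then show ?thesis using RL_leaves LR LN' by (intro exI[of _ L]) auto
    qed
  qed
  have oldform: "\<And>P. P \<in> A' \<union> B' \<Longrightarrow> \<exists>c e. P = {c, e} \<and> c \<in> N' \<and> e \<in> N' \<and> c \<noteq> e \<and> \<not> anc c e \<and> \<not> anc e c"
    using tr by (auto simp: transversal_def)
  have oldsub: "\<And>P. P \<in> A' \<union> B' \<Longrightarrow> P \<subseteq> N'" using oldform by blast
  have newsub: "\<And>P. P \<in> NA \<union> NB \<Longrightarrow> P \<subseteq> leaves N" using newform RL_leaves by blast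
  have allsub: "\<And>P. P \<in> A \<union> B \<Longrightarrow> P \<subseteq> N"
    using oldsub newsub leaves_sub unfolding A_def B_def N_def by blast
  have NsupN': "N' \<subseteq> N" by (auto simp: N_def)

  have disjN: "A \<inter> B = {}"
  proof -
    have "A' \<inter> NB = {}" "NA \<inter> B' = {}" using oldsub newform RN' by blast+
    moreover have "NA \<inter> NB = {}"
    proof (rule ccontr)
      assume "NA \<inter> NB \<noteq> {}"
      then obtain P where PA: "P \<in> NA" and PB: "P \<in> NB" by blast
      have fDN: "\<And>w. w \<in> D \<Longrightarrow> f' w \<noteq> R \<and> f' w \<noteq> L" using fD RN' LN' leaves_sub by blast
      have Dv: "\<And>w. w \<in> D \<Longrightarrow> w \<in> V - {v}" using Dsub by blast
      show False using PA PB fDN LR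
        unfolding NA_def NB_def
        apply (auto simp: doubleton_eq_iff split: if_splits)
        subgoal for w wa
          using Dv[of w] Dv[of wa] finj by (metis inj_on_eq_iff)
        subgoal for w wa
          using Dv[of w] Dv[of wa] finj by (metis inj_on_eq_iff)
        done
    qed
    ultimately show ?thesis using disj by (auto simp: A_def B_def)
  qed
  have trN: "\<forall>P\<in>A \<union> B. transversal N P"
  proof
    fix P assume "P \<in> A \<union> B"
    then consider "P \<in> A' \<union> B'" | "P \<in> NA \<union> NB" by (auto simp: A_def B_def)
    then show "transversal N P"
    proof cases
      case 1
      then obtain c e where "P = {c, e} \<and> c \<in> N' \<and> e \<in> N' \<and> c \<noteq> e \<and> \<not> anc c e \<and> \<not> anc e c"
        using oldform by blast
      then show ?thesis using NsupN' unfolding transversal_def by blast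
    next
      case 2
      then obtain c where c: "c \<in> leaves N" "c \<noteq> R" "P = {R, c}" using newform by blast
      then show ?thesis using RL_leaves leaf_no_anc[OF ftN] leaves_sub unfolding transversal_def
        by blast
    qed
  qed
  have ncN: "\<forall>P\<in>A \<union> B. \<forall>Q\<in>A \<union> B. \<not> cross P Q"
  proof (intro ballI)
    fix P Q assume P: "P \<in> A \<union> B" and Q: "Q \<in> A \<union> B"
    show "\<not> cross P Q"
    proof
      assume "cross P Q"
      then obtain a b a' b' where ab: "P = {a, b}" "Q = {a', b'}" "anc a a'" "anc b' b"
        unfolding cross_def by blast
      have "a \<in> N" "b \<in> N" "a' \<in> N" "b' \<in> N" using allsub P Q ab by auto
      show False
      proof (cases "P \<in> NA \<union> NB")
        case True
        then have "a \<in> leaves N" using newsub ab by blast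
        then show False using leaf_no_anc[OF ftN] \<open>a' \<in> N\<close> ab by blast
      next
        case PF: False
        show False
        proof (cases "Q \<in> NA \<union> NB")
          case True
          then have "b' \<in> leaves N" using newsub ab by blast
          then show False using leaf_no_anc[OF ftN] \<open>b \<in> N\<close> ab by blast
        next
          case False
          then have "P \<in> A' \<union> B'" "Q \<in> A' \<union> B'" using P Q PF by (auto simp: A_def B_def)
          then show False using nc \<open>cross P Q\<close> by blast
        qed
      qed
    qed
  qed
  have stmN: "signed_tree_model N A B"
    using ftN trN disjN ncN by (simp add: signed_tree_model_def)

  have clN: "clean N A B"
    unfolding clean_def
  proof (intro allI impI)
    fix q assume q: "q @ [False] \<in> N"
    show "{q @ [False], q @ [True]} \<in> A \<union> B"
    proof (cases "q = p")
      case True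
      then show ?thesis by (auto simp: A_def B_def NA_def NB_def L_def R_def)
    next
      case False
      then have "q @ [False] \<in> N'" using q by (auto simp: N_def L_def R_def)
      then show ?thesis using cl by (auto simp: clean_def A_def B_def)
    qed
  qed

  have dgN: "degeneracy_le N (A \<union> B) (d + 1)"
    unfolding degeneracy_le_def
  proof (intro allI impI)
    fix S assume S: "S \<subseteq> N" "S \<noteq> {}"
    show "\<exists>x\<in>S. card {y \<in> S. y \<noteq> x \<and> {x, y} \<in> A \<union> B} \<le> d + 1"
    proof (cases "R \<in> S")
      case True
      have sub: "{y \<in> S. y \<noteq> R \<and> {R, y} \<in> A \<union> B} \<subseteq> insert L (f' ` D)"
      proof
        fix y assume y: "y \<in> {y \<in> S. y \<noteq> R \<and> {R, y} \<in> A \<union> B}"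
        then have "{R, y} \<in> NA \<union> NB" using oldsub RN' by (auto simp: A_def B_def)
        then show "y \<in> insert L (f' ` D)" using y
          by (auto simp: NA_def NB_def doubleton_eq_iff split: if_splits)
      qed
      have "card {y \<in> S. y \<noteq> R \<and> {R, y} \<in> A \<union> B} \<le> card (insert L (f' ` D))"
        using card_mono[OF _ sub] Dfin by blast
      also have "\<dots> \<le> Suc (card (f' ` D))" using Dfin by (simp add: card_insert_if)
      also have "\<dots> \<le> Suc (card D)" using card_image_le[OF Dfin] by simp
      finally show ?thesis using True Dcard by (intro bexI[of _ R]) auto
    next
      case noR: False
      show ?thesis
      proof (cases "L \<in> S")
        case True
        have e: "{y \<in> S. y \<noteq> L \<and> {L, y} \<in> A \<union> B} = {}"
        proof -
          { fix y assume y: "y \<in> S" "y \<noteq> L" "{L, y} \<in> A \<union> B"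
            then have "{L, y} \<in> NA \<union> NB" using oldsub LN' by (auto simp: A_def B_def)
            then obtain c where "{L, y} = {R, c}" using newform by blast
            then have False using y noR LR by (auto simp: doubleton_eq_iff) }
          then show ?thesis by blast
        qed
        have "card {y \<in> S. y \<noteq> L \<and> {L, y} \<in> A \<union> B} \<le> d + 1" unfolding e by simp
        then show ?thesis using True by blast
      next
        case False
        then have SN': "S \<subseteq> N'" using S noR by (auto simp: N_def)
        then obtain x where x: "x \<in> S" "card {y \<in> S. y \<noteq> x \<and> {x, y} \<in> A' \<union> B'} \<le> d + 1"
          using dg S unfolding degeneracy_le_def by blast
        have "{y \<in> S. y \<noteq> x \<and> {x, y} \<in> A \<union> B} = {y \<in> S. y \<noteq> x \<and> {x, y} \<in> A' \<union> B'}"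
        proof -
          { fix y assume y: "y \<in> S" "{x, y} \<in> NA \<union> NB"
            then obtain c where "{x, y} = {R, c}" using newform by blast
            then have False using y x SN' RN' by (auto simp: doubleton_eq_iff) }
          then show ?thesis by (auto simp: A_def B_def)
        qed
        then show ?thesis using x by (metis (no_types, lifting))
      qed
    qed
  qed

  have gV: "\<And>x. x \<in> V \<Longrightarrow> g x \<in> leaves N"
    using fN fD leavesN finj uV' p_def by (auto simp: g_def inj_on_eq_iff)
  have ginj: "inj_on g V"
  proof
    fix x y assume xy: "x \<in> V" "y \<in> V" "g x = g y"
    have fN': "\<And>z. z \<in> V - {v} \<Longrightarrow> f' z \<in> N'" using fN leaves_sub by blast
    show "x = y" using xy LR fN'[of x] fN'[of y] LN' RN' finj
      by (auto simp: g_def inj_on_eq_iff split: if_splits)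
  qed
  have gimg: "g ` V = leaves N"
  proof
    show "g ` V \<subseteq> leaves N" using gV by blast
    show "leaves N \<subseteq> g ` V"
    proof
      fix z assume "z \<in> leaves N"
      then consider "z = L" | "z = R" | "z \<in> leaves N' - {p}" using leavesN by blast
      then show "z \<in> g ` V"
      proof cases
        case 1 then show ?thesis using uV' by (auto simp: g_def image_iff intro!: bexI[of _ u])
      next
        case 2 then show ?thesis using step.hyps by (auto simp: g_def image_iff intro!: bexI[of _ v])
      next
        case 3
        then obtain x where x: "x \<in> V - {v}" "z = f' x" using fimg by blast
        then have "x \<noteq> u" using 3 p_def by blast
        then show ?thesis using x by (auto simp: g_def image_iff intro!: bexI[of _ x])
      qed
    qed
  qed
  have gbij: "bij_betw g V (leaves N)" using ginj gimg by (simp add: bij_betw_def)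

  define r where "r = (\<lambda>x. if x = v then u else x)"
  have rV: "\<And>x. x \<in> V \<Longrightarrow> r x \<in> V - {v}" using uV' by (auto simp: r_def)
  have ga: "\<And>c x. c \<in> N' \<Longrightarrow> x \<in> V \<Longrightarrow> anc_eq c (g x) = anc_eq c (f' (r x))"
  proof -
    fix c x assume c: "c \<in> N'" and x: "x \<in> V"
    show "anc_eq c (g x) = anc_eq c (f' (r x))"
    proof (cases "x = v")
      case True then show ?thesis using c RN' by (auto simp: g_def r_def R_def p_def anc_eq_snoc)
    next
      case False then show ?thesis using c LN' by (auto simp: g_def r_def L_def p_def anc_eq_snoc)
    qed
  qed
  have old_le: "\<And>P x y. P \<in> A' \<union> B' \<Longrightarrow> x \<in> V \<Longrightarrow> y \<in> V \<Longrightarrow>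
      pair_le P {g x, g y} = pair_le P {f' (r x), f' (r y)}"
  proof -
    fix P x y assume P: "P \<in> A' \<union> B'" and xy: "x \<in> V" "y \<in> V"
    then obtain c e where "P = {c, e}" "c \<in> N'" "e \<in> N'" using oldform by blast
    then show "pair_le P {g x, g y} = pair_le P {f' (r x), f' (r y)}"
      using ga xy by (simp add: pair_le_iff)
  qed
  have new_le: "\<And>P x y. P \<in> NA \<union> NB \<Longrightarrow> x \<in> V \<Longrightarrow> y \<in> V \<Longrightarrow>
      pair_le P {g x, g y} \<Longrightarrow> P = {g x, g y}"
  proof -
    fix P x y assume P: "P \<in> NA \<union> NB" and xy: "x \<in> V" "y \<in> V" and le: "pair_le P {g x, g y}"
    then obtain c where "c \<in> leaves N" "P = {R, c}" using newform by blast
    then show "P = {g x, g y}" using new_pair_le[OF ftN, of R c "g x" "g y"] RL_leaves gV xy le leaves_sub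
      by blast
  qed
  have fN'': "\<And>z. z \<in> V - {v} \<Longrightarrow> f' z \<in> N'" using fN leaves_sub by blast
  have adjN: "\<And>x y. x \<in> V \<Longrightarrow> y \<in> V \<Longrightarrow> x \<noteq> y \<Longrightarrow> E x y = model_adj A B (g x) (g y)"
  proof -
    fix x y assume x: "x \<in> V" and y: "y \<in> V" and xy: "x \<noteq> y"
    have gxy: "g x \<noteq> g y" using ginj x y xy inj_on_eq_iff by metis
    show "E x y = model_adj A B (g x) (g y)"
    proof (cases "{g x, g y} \<in> NA \<union> NB")
      case True
      have "if E x y then {g x, g y} \<in> B else {g x, g y} \<in> A"
      proof -
        from True have "(\<exists>w. w \<in> D \<and> {g x, g y} = {R, f' w}) \<or> {g x, g y} = {L, R}"
          by (auto simp: NA_def NB_def split: if_splits)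
        then show ?thesis
        proof
          assume "\<exists>w. w \<in> D \<and> {g x, g y} = {R, f' w}"
          then obtain w where w: "w \<in> D" "{g x, g y} = {R, f' w}" by blast
          have wV: "w \<in> V - {u, v}" using w Dsub by blast
          have "(x = v \<and> y = w) \<or> (y = v \<and> x = w)"
          proof -
            have "g w = f' w" using wV by (simp add: g_def)
            have "g v = R" by (simp add: g_def)
            then have "{g x, g y} = {g v, g w}" using w \<open>g w = f' w\<close> by simp
            then show ?thesis using ginj x y wV step.hyps(2) inj_on_eq_iff
              by (metis DiffD1 doubleton_eq_iff)
          qed
          then have "E x y = E v w" using symE by auto
          then show ?thesis using w by (auto simp: A_def B_def NA_def NB_def)
        next
          assume "{g x, g y} = {L, R}"
          then have "{x, y} = {u, v}"
          proof -
            have "g u = L" "g v = R" using step.hyps(3) by (auto simp: g_def)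
            then have "{g x, g y} = {g u, g v}" using \<open>{g x, g y} = {L, R}\<close> by simp
            then show ?thesis using ginj x y step.hyps(1,2) inj_on_eq_iff
              by (metis doubleton_eq_iff)
          qed
          then have "E x y = E u v" using symE by (auto simp: doubleton_eq_iff)
          then show ?thesis using \<open>{g x, g y} = {L, R}\<close> by (auto simp: A_def B_def NA_def NB_def)
        qed
      qed
      then show ?thesis using adj_in_B[of "g x" "g y" B A] adj_in_A[of "g x" "g y" A B] disjN gxy
        by (auto split: if_splits)
    next
      case False
      have notuv: "{x, y} \<noteq> {u, v}"
      proof
        assume "{x, y} = {u, v}"
        then have "{g x, g y} = {L, R}" using step.hyps(3) by (auto simp: g_def doubleton_eq_iff)
        then show False using False by (auto simp: NA_def NB_def split: if_splits)
      qed
      have rxy: "r x \<noteq> r y" using notuv xy by (auto simp: r_def)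
      have frxy: "f' (r x) \<noteq> f' (r y)" using rxy rV x y finj inj_on_eq_iff by metis
      have nle: "\<And>P. P \<in> NA \<union> NB \<Longrightarrow> \<not> pair_le P {g x, g y}"
        using new_le[OF _ x y] False by metis
      have ole: "\<And>P. P \<in> A' \<union> B' \<Longrightarrow> pair_le P {g x, g y} = pair_le P {f' (r x), f' (r y)}"
        using old_le[OF _ x y] by blast
      have Bt: "\<And>P. (P \<in> B \<and> pair_le P {g x, g y}) = (P \<in> B' \<and> pair_le P {f' (r x), f' (r y)})"
        unfolding B_def using nle ole by blast
      have At: "\<And>P. (P \<in> A \<and> pair_le P {g x, g y}) = (P \<in> A' \<and> pair_le P {f' (r x), f' (r y)})"
        unfolding A_def using nle ole by blast
      have madj: "model_adj A B (g x) (g y) = model_adj A' B' (f' (r x)) (f' (r y))"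
        using adj_transfer[OF gxy frxy Bt At] .
      have "E (r x) (r y) = model_adj A' B' (f' (r x)) (f' (r y))"
        using adj rV x y rxy by blast
      moreover have "E x y = E (r x) (r y)"
      proof (cases "x = v")
        case True
        then have yuv: "y \<in> V - {u, v}" using y xy notuv by auto
        have "y \<notin> D"
        proof
          assume "y \<in> D"
          then have "{R, f' y} \<in> NA \<union> NB" by (auto simp: NA_def NB_def)
          then show False using False True yuv by (simp add: g_def)
        qed
        then show ?thesis using Dchar[OF yuv] True yuv by (auto simp: r_def)
      next
        case xv: False
        show ?thesis
        proof (cases "y = v")
          case True
          then have xuv: "x \<in> V - {u, v}" using x xy notuv by auto
          have "x \<notin> D"
          proof
            assume "x \<in> D"
            then have "{R, f' x} \<in> NA \<union> NB" by (auto simp: NA_def NB_def)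
            then show False using False True xuv by (simp add: g_def insert_commute)
          qed
          then show ?thesis using Dchar[OF xuv] True xuv symE by (auto simp: r_def)
        next
          case False then show ?thesis using xv by (simp add: r_def)
        qed
      qed
      ultimately show ?thesis using madj by simp
    qed
  qed
  have "admits_model V E N A B" unfolding admits_model_def using gbij adjN by blast
  then show ?case using stmN clN dgN by blast
qed

theorem lemma3p1:
  fixes V :: "'a set" and E :: "'a \<Rightarrow> 'a \<Rightarrow> bool" and d :: nat
  assumes "graph V E" and "V \<noteq> {}" and "sdd_le V E d"
  shows "\<exists>N A B. signed_tree_model N A B \<and> clean N A B
           \<and> degeneracy_le N (A \<union> B) (d + 1) \<and> admits_model V E N A B"
  using main[OF assms(3)] assms(1) unfolding graph_def by blast

end
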